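(* Every positive divisor of an odd Gaussian Carmichael number is $G$-cyclic.
   Context: For a positive integer $n$, $\mathcal{G}_n=\{a+bi\in\mathbb{Z}[i]/n\mathbb{Z}[i] : a^2+b^2\equiv 1\pmod n\}$ and $\Phi(n)=|\mathcal{G}_n|$. An integer $n\ge1$ is $G$-cyclic if $\gcd(\Phi(n),n)=1$. The function $\mathcal{F}$ is defined by $\mathcal{F}(n)=n-1$ if $n\equiv 1\pmod 4$, $\mathcal{F}(n)=n+1$ if $n\equiv 3 \pmod 4$, $\mathcal{F}(n)=n$ otherwise. A composite integer $n$ is a Gaussian Fermat pseudoprime to base $z\in\mathbb{Z}[i]$ if $\gcd(n,z\overline{z})=1$ and $(z/\overline{z})^{\mathcal{F}(n)}\equiv 1\pmod n$ in $\mathbb{Z}[i]/n\mathbb{Z}[i]$. A composite $n$ is a Gaussian Carmichael number if it is a Gaussian Fermat pseudoprime to base $z$ for every $z\in\mathbb{Z}[i]$ with $\gcd(n,z\overline{z})=1$. *)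

theory Defs
  imports "HOL-Number_Theory.Number_Theory"
begin

(* Gaussian integers a+bi represented as pairs (a,b) of integers *)
type_synonym gint = "int \<times> int"

definition gmul :: "gint \<Rightarrow> gint \<Rightarrow> gint" where
  "gmul z w = (fst z * fst w - snd z * snd w, fst z * snd w + snd z * fst w)"

definition gone :: gint where "gone = (1, 0)"

definition gpow :: "gint \<Rightarrow> nat \<Rightarrow> gint" where
  "gpow z k = ((gmul z) ^^ k) gone"

definition gcnj :: "gint \<Rightarrow> gint" where
  "gcnj z = (fst z, - snd z)"

(* z * conj z = a^2 + b^2 *)
definition gnorm :: "gint \<Rightarrow> int" where
  "gnorm z = fst z ^ 2 + snd z ^ 2"

(* congruence in Z[i]/nZ[i] *)
definition gcong :: "nat \<Rightarrow> gint \<Rightarrow> gint \<Rightarrow> bool" where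
  "gcong n z w \<longleftrightarrow> [fst z = fst w] (mod int n) \<and> [snd z = snd w] (mod int n)"

(* G_n, with Z[i]/nZ[i] represented by residues a+bi, 0 <= a,b < n *)
definition G_set :: "nat \<Rightarrow> gint set" where
  "G_set n = {(a, b). 0 \<le> a \<and> a < int n \<and> 0 \<le> b \<and> b < int n \<and> [a^2 + b^2 = 1] (mod int n)}"

definition Phi :: "nat \<Rightarrow> nat" where
  "Phi n = card (G_set n)"

definition G_cyclic :: "nat \<Rightarrow> bool" where
  "G_cyclic n \<longleftrightarrow> n \<ge> 1 \<and> gcd (Phi n) n = 1"

definition FF :: "nat \<Rightarrow> nat" where
  "FF n = (if n mod 4 = 1 then n - 1 else if n mod 4 = 3 then n + 1 else n)"

definition composite :: "nat \<Rightarrow> bool" where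
  "composite n \<longleftrightarrow> n > 1 \<and> \<not> prime n"

(* (z / conj z)^F(n) = 1 in Z[i]/nZ[i]: w is the inverse of conj z modulo n *)
definition gaussian_fermat_psp :: "nat \<Rightarrow> gint \<Rightarrow> bool" where
  "gaussian_fermat_psp n z \<longleftrightarrow> composite n \<and> coprime (int n) (gnorm z) \<and>
     (\<exists>w. gcong n (gmul (gcnj z) w) gone \<and> gcong n (gpow (gmul z w) (FF n)) gone)"

definition gaussian_carmichael :: "nat \<Rightarrow> bool" where
  "gaussian_carmichael n \<longleftrightarrow> composite n \<and>
     (\<forall>z. coprime (int n) (gnorm z) \<longrightarrow> gaussian_fermat_psp n z)"

end

theory Submission
  imports Defs "HOL-Algebra.Sylow" "HOL-Algebra.Multiplicative_Group"
begin

lemma gmul_comm: "gmul z w = gmul w z"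
  by (simp add: gmul_def algebra_simps)

lemma gmul_assoc: "gmul (gmul x y) z = gmul x (gmul y z)"
  by (simp add: gmul_def algebra_simps)

lemma gmul_one[simp]: "gmul gone z = z"
  by (simp add: gmul_def gone_def)

lemma gmul_one_r[simp]: "gmul z gone = z"
  by (simp add: gmul_def gone_def)

lemma gpow_0[simp]: "gpow z 0 = gone"
  by (simp add: gpow_def)

lemma gpow_Suc: "gpow z (Suc k) = gmul z (gpow z k)"
  by (simp add: gpow_def)

lemma gpow_1[simp]: "gpow z 1 = z"
  by (simp add: gpow_Suc)

lemma gpow_add: "gpow z (a + b) = gmul (gpow z a) (gpow z b)"
  by (induction a) (simp_all add: gpow_Suc gmul_assoc)

lemma gpow_mult: "gpow z (a * b) = gpow (gpow z a) b"
proof (induction b)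
  case 0 then show ?case by simp
next
  case (Suc b)
  have "gpow z (a * Suc b) = gmul (gpow z a) (gpow z (a * b))"
    by (metis add.commute gpow_add mult_Suc_right)
  then show ?case using Suc by (simp add: gpow_Suc)
qed

lemma gpow_gone[simp]: "gpow gone k = gone"
  by (induction k) (simp_all add: gpow_Suc)

lemma gnorm_mult: "gnorm (gmul z w) = gnorm z * gnorm w"
  by (simp add: gnorm_def gmul_def power2_eq_square algebra_simps)

lemma gmul_cnj: "gmul z (gcnj z) = (gnorm z, 0)"
  by (simp add: gmul_def gcnj_def gnorm_def power2_eq_square)

lemma gcong_refl[simp]: "gcong m z z"
  by (simp add: gcong_def)

lemma gcong_sym: "gcong m z w \<Longrightarrow> gcong m w z"
  by (simp add: gcong_def cong_sym)

lemma gcong_trans: "gcong m x y \<Longrightarrow> gcong m y z \<Longrightarrow> gcong m x z"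
  unfolding gcong_def by (meson cong_trans)

lemma gcong_mul: "gcong m x x' \<Longrightarrow> gcong m y y' \<Longrightarrow> gcong m (gmul x y) (gmul x' y')"
  unfolding gcong_def gmul_def by (auto intro!: cong_add cong_diff cong_mult)

lemma gcong_pow: "gcong m x y \<Longrightarrow> gcong m (gpow x k) (gpow y k)"
  by (induction k) (simp_all add: gpow_Suc gcong_mul)

lemma gcong_dvd: "gcong n x y \<Longrightarrow> m dvd n \<Longrightarrow> gcong m x y"
  unfolding gcong_def by (meson cong_dvd_modulus int_dvd_int_iff)

lemma gcong_norm: "gcong m x y \<Longrightarrow> [gnorm x = gnorm y] (mod int m)"
  unfolding gcong_def gnorm_def by (auto intro!: cong_add cong_pow)

lemma key_K:
  assumes "gcong m (gpow z a) gone" "gcong m (gpow z b) gone" "coprime a b" "a > 0"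
  shows "gcong m z gone"
proof -
  obtain x y where xy: "a * x = b * y + 1"
    using bezout_nat[of a b] assms(3,4) by auto
  have "gcong m (gpow z (a * x)) gone"
    unfolding gpow_mult using gcong_pow[OF assms(1), of x] by simp
  moreover have "gpow z (a * x) = gmul (gpow (gpow z b) y) z"
    by (simp only: xy gpow_add gpow_mult gpow_1)
  moreover have "gcong m (gmul (gpow (gpow z b) y) z) (gmul gone z)"
    using gcong_mul[OF gcong_pow[OF assms(2), of y] gcong_refl] by simp
  ultimately show ?thesis
    by (metis gcong_sym gcong_trans gmul_one)
qed

lemma key_L:
  assumes "gaussian_carmichael n" "m dvd n" "coprime (int n) (gnorm z)"
    "[gnorm z = 1] (mod int m)"
  shows "gcong m (gpow z (2 * FF n)) gone"
proof -
  obtain w where w1: "gcong n (gmul (gcnj z) w) gone" and w2: "gcong n (gpow (gmul z w) (FF n)) gone"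
    using assms(1,3) unfolding gaussian_carmichael_def gaussian_fermat_psp_def by blast
  have w1': "gcong m (gmul (gcnj z) w) gone" using gcong_dvd[OF w1 assms(2)] .
  have w2': "gcong m (gpow (gmul z w) (FF n)) gone" using gcong_dvd[OF w2 assms(2)] .
  have zc: "gcong m (gmul z (gcnj z)) gone"
    using assms(4) by (simp add: gmul_cnj gcong_def gone_def)
  have e: "gmul (gmul z w) (gmul z (gcnj z)) = gmul (gmul z z) (gmul (gcnj z) w)"
    by (simp add: gmul_def algebra_simps)
  have "gcong m (gmul (gmul z w) gone) (gmul (gmul z w) (gmul z (gcnj z)))"
    using gcong_mul[OF gcong_refl gcong_sym[OF zc]] .
  also have "gcong m (gmul (gmul z z) (gmul (gcnj z) w)) (gmul (gmul z z) gone)"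
    using gcong_mul[OF gcong_refl w1'] .
  ultimately have "gcong m (gmul z w) (gmul z z)"
    using e by (metis gcong_trans gmul_one_r)
  then have "gcong m (gpow (gmul z z) (FF n)) gone"
    by (meson gcong_pow gcong_sym gcong_trans w2')
  moreover have "gpow z 2 = gmul z z" by (simp add: numeral_2_eq_2 gpow_Suc)
  then have "gpow (gmul z z) (FF n) = gpow z (2 * FF n)"
    by (metis gpow_mult)
  ultimately show ?thesis by simp
qed

lemma coprime_p_F:
  assumes "prime p" "p dvd n" "odd n"
  shows "coprime p (2 * FF n)"
proof -
  have "\<not> p dvd 2" using assms
    by (metis dvd_trans even_numeral prime_nat_iff two_is_prime_nat primes_dvd_imp_eq)
  moreover have "\<not> p dvd FF n"
  proof
    assume h: "p dvd FF n"
    have "n mod 4 = 1 \<or> n mod 4 = 3" using assms(3) by presburger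
    then have "p dvd 1"
    proof
      assume "n mod 4 = 1"
      then have "p dvd n - 1" using h by (simp add: FF_def)
      then show ?thesis using assms(2)
        by (metis assms(3) dvd_diff_nat diff_diff_cancel odd_pos less_one le_eq_less_or_eq
             Suc_leI not_less)
    next
      assume "n mod 4 = 3"
      then have "p dvd n + 1" using h by (simp add: FF_def)
      then show ?thesis using assms(2) by (metis dvd_add_right_iff)
    qed
    then show False using assms(1) by simp
  qed
  ultimately show ?thesis using assms(1)
    by (metis prime_dvd_mult_iff prime_imp_coprime)
qed

lemma sqfree:
  assumes "gaussian_carmichael n" "odd n" "prime p" "p * p dvd n"
  shows False
proof -
  have n1: "n > 1" using assms(1) by (simp add: gaussian_carmichael_def composite_def)
  obtain t where t: "n = p * p * t" using assms(4) by blast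
  define s where "s = p * t"
  have ns: "n = p * s" using t s_def by simp
  have p1: "p > 1" using assms(3) prime_gt_1_nat by blast
  have s0: "s > 0" using ns n1 by (cases s) auto
  have sn: "s < n" using ns p1 s0 by simp
  have "s * s = n * t" using ns s_def by simp
  then have ss: "int n dvd int s * int s"
    by (metis dvd_triv_left of_nat_mult)
  define z where "z = (1::int, int s)"
  have nz: "[gnorm z = 1] (mod int n)"
    using ss unfolding z_def gnorm_def power2_eq_square
    by (simp add: cong_iff_dvd_diff)
  have cop: "coprime (int n) (gnorm z)"
  proof -
    have "gcd (gnorm z) (int n) = gcd 1 (int n)" using cong_gcd_eq[OF nz] .
    then show ?thesis by (simp add: coprime_iff_gcd_eq_1 gcd.commute)
  qed
  have powk: "gcong n (gpow z k) (1, int k * int s)" for k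
  proof (induction k)
    case 0 then show ?case by (simp add: gone_def)
  next
    case (Suc k)
    have "gcong n (gpow z (Suc k)) (gmul z (1, int k * int s))"
      unfolding gpow_Suc using gcong_mul[OF gcong_refl Suc] .
    moreover have "gcong n (gmul z (1, int k * int s)) (1, int (Suc k) * int s)"
    proof -
      have "[1 - int s * (int k * int s) = 1] (mod int n)"
        using ss by (simp add: cong_iff_dvd_diff algebra_simps)
      then show ?thesis unfolding z_def gmul_def gcong_def by (simp add: algebra_simps)
    qed
    ultimately show ?case using gcong_trans by blast
  qed
  have "[int p * int s = 0] (mod int n)" by (simp add: ns cong_0_iff)
  then have "gcong n (gpow z p) gone"
  proof -
    have "[fst (gpow z p) = 1] (mod int n)" "[snd (gpow z p) = int p * int s] (mod int n)"
      using powk[of p] unfolding gcong_def by auto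
    then show ?thesis unfolding gcong_def gone_def using \<open>[int p * int s = 0] (mod int n)\<close>
      by (metis cong_trans fst_conv snd_conv)
  qed
  moreover have "gcong n (gpow z (2 * FF n)) gone"
    using key_L[OF assms(1) dvd_refl cop nz] .
  moreover have "coprime p (2 * FF n)"
    using coprime_p_F[OF assms(3) _ assms(2)] ns by simp
  ultimately have "gcong n z gone" using key_K p1 by (metis gr_implies_not0 neq0_conv)
  then have "[int s = 0] (mod int n)" by (simp add: gcong_def z_def gone_def)
  then have "n dvd s" by (metis cong_0_iff int_dvd_int_iff)
  then show False using s0 sn nat_dvd_not_less by blast
qed

definition redm :: "nat \<Rightarrow> gint \<Rightarrow> gint" where
  "redm d z = (fst z mod int d, snd z mod int d)"

definition Gd :: "nat \<Rightarrow> gint monoid" where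
  "Gd d = \<lparr>carrier = G_set d, mult = (\<lambda>x y. redm d (gmul x y)), one = redm d gone\<rparr>"

lemma gcong_iff: "gcong d x y \<longleftrightarrow> redm d x = redm d y"
  by (simp add: gcong_def redm_def cong_def prod_eq_iff)

lemma gcong_redm: "gcong d (redm d x) x"
  by (simp add: gcong_def redm_def)

lemma redm_redm[simp]: "redm d (redm d x) = redm d x"
  by (simp add: redm_def)

lemma mod_self_iff: "(m::int) > 0 \<Longrightarrow> (0 \<le> a \<and> a < m) \<longleftrightarrow> a mod m = a"
  by (metis mod_pos_pos_trivial pos_mod_bound pos_mod_sign)

lemma G_set_iff:
  assumes "d > 0"
  shows "x \<in> G_set d \<longleftrightarrow> redm d x = x \<and> [gnorm x = 1] (mod int d)"
proof -
  obtain a b where x: "x = (a, b)" by (cases x)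
  have d: "int d > 0" using assms by simp
  show ?thesis
    unfolding x G_set_def redm_def gnorm_def
    using mod_self_iff[OF d, of a] mod_self_iff[OF d, of b] by auto
qed

lemma Gd_group:
  assumes "d > 0"
  shows "comm_group (Gd d)"
proof (rule comm_groupI)
  fix x y assume x: "x \<in> carrier (Gd d)" and y: "y \<in> carrier (Gd d)"
  have "[gnorm (redm d (gmul x y)) = gnorm (gmul x y)] (mod int d)"
    using gcong_norm[OF gcong_redm] .
  moreover have "[gnorm (gmul x y) = 1 * 1] (mod int d)"
    unfolding gnorm_mult using x y assms
    by (intro cong_mult) (simp_all add: Gd_def G_set_iff)
  ultimately show "x \<otimes>\<^bsub>Gd d\<^esub> y \<in> carrier (Gd d)"
    using assms by (auto simp: Gd_def G_set_iff intro: cong_trans)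
next
  have "[gnorm (redm d gone) = gnorm gone] (mod int d)"
    using gcong_norm[OF gcong_redm] .
  then show "\<one>\<^bsub>Gd d\<^esub> \<in> carrier (Gd d)"
    using assms by (simp add: Gd_def G_set_iff gnorm_def gone_def)
next
  fix x y z assume "x \<in> carrier (Gd d)" "y \<in> carrier (Gd d)" "z \<in> carrier (Gd d)"
  have "redm d (gmul (redm d (gmul x y)) z) = redm d (gmul (gmul x y) z)"
    using gcong_mul[OF gcong_redm gcong_refl] gcong_iff by blast
  moreover have "redm d (gmul x (redm d (gmul y z))) = redm d (gmul x (gmul y z))"
    using gcong_mul[OF gcong_refl gcong_redm] gcong_iff by blast
  ultimately show "x \<otimes>\<^bsub>Gd d\<^esub> y \<otimes>\<^bsub>Gd d\<^esub> z = x \<otimes>\<^bsub>Gd d\<^esub> (y \<otimes>\<^bsub>Gd d\<^esub> z)"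
    by (simp add: Gd_def gmul_assoc)
next
  fix x y assume "x \<in> carrier (Gd d)" "y \<in> carrier (Gd d)"
  show "x \<otimes>\<^bsub>Gd d\<^esub> y = y \<otimes>\<^bsub>Gd d\<^esub> x"
    by (simp add: Gd_def gmul_comm)
next
  fix x assume x: "x \<in> carrier (Gd d)"
  have "redm d (gmul (redm d gone) x) = redm d (gmul gone x)"
    using gcong_mul[OF gcong_redm gcong_refl] gcong_iff by blast
  then show "\<one>\<^bsub>Gd d\<^esub> \<otimes>\<^bsub>Gd d\<^esub> x = x"
    using x assms by (simp add: Gd_def G_set_iff)
next
  fix x assume x: "x \<in> carrier (Gd d)"
  have nx: "[gnorm x = 1] (mod int d)" using x assms by (simp add: Gd_def G_set_iff)
  define y where "y = redm d (gcnj x)"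
  have "gnorm (gcnj x) = gnorm x" by (simp add: gcnj_def gnorm_def)
  then have "[gnorm y = 1] (mod int d)"
    using gcong_norm[OF gcong_redm, of d "gcnj x"] nx unfolding y_def by (metis cong_trans)
  then have yc: "y \<in> carrier (Gd d)" using assms by (simp add: Gd_def G_set_iff y_def)
  have "gcong d (gmul y x) (gmul (gcnj x) x)"
    using gcong_mul[OF gcong_redm gcong_refl] unfolding y_def .
  moreover have "gcong d (gmul (gcnj x) x) gone"
    using nx by (simp add: gmul_comm[of "gcnj x"] gmul_cnj gcong_def gone_def)
  ultimately have "redm d (gmul y x) = redm d gone"
    using gcong_iff gcong_trans by blast
  then show "\<exists>y\<in>carrier (Gd d). y \<otimes>\<^bsub>Gd d\<^esub> x = \<one>\<^bsub>Gd d\<^esub>"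
    using yc by (auto simp: Gd_def)
qed

lemma Gd_pow:
  assumes "d > 0" "x \<in> G_set d"
  shows "x [^]\<^bsub>Gd d\<^esub> k = redm d (gpow x k)"
proof (induction k)
  case 0 then show ?case by (simp add: Gd_def)
next
  case (Suc k)
  have "x [^]\<^bsub>Gd d\<^esub> Suc k = redm d (gmul (redm d (gpow x k)) x)"
    using Suc by (simp add: Gd_def)
  also have "\<dots> = redm d (gmul (gpow x k) x)"
    using gcong_mul[OF gcong_redm gcong_refl] gcong_iff by blast
  finally show ?case by (simp add: gpow_Suc gmul_comm)
qed

lemma finite_G_set: "finite (G_set d)"
proof -
  have "G_set d \<subseteq> {0..<int d} \<times> {0..<int d}" by (auto simp: G_set_def)
  then show ?thesis by (rule finite_subset) simp
qed

theorem mainTheorem12: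
  fixes n d :: nat
  assumes "odd n" and "gaussian_carmichael n" and "d dvd n" and "d > 0"
  shows "G_cyclic d"
proof (rule ccontr)
  assume nc: "\<not> G_cyclic d"
  have n1: "n > 1" using assms(2) by (simp add: gaussian_carmichael_def composite_def)
  have "gcd (Phi d) d \<noteq> 1" using nc assms(4) by (simp add: G_cyclic_def)
  then obtain p where p: "prime p" "p dvd gcd (Phi d) d" using prime_factor_nat by blast
  have pP: "p dvd Phi d" and pd: "p dvd d" using p(2) by auto
  have pn: "p dvd n" using pd assms(3) by (rule dvd_trans)
  interpret G: comm_group "Gd d" using Gd_group[OF assms(4)] .
  have fin: "finite (carrier (Gd d))" by (simp add: Gd_def finite_G_set)
  have ord: "order (Gd d) = p ^ 1 * (Phi d div p)"
    using pP by (simp add: order_def Gd_def Phi_def)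
  obtain H where H: "subgroup H (Gd d)" "card H = p"
    using sylow_thm[OF p(1) G.is_group ord fin] by auto
  have "\<not> H \<subseteq> {\<one>\<^bsub>Gd d\<^esub>}"
  proof
    assume "H \<subseteq> {\<one>\<^bsub>Gd d\<^esub>}"
    then have "card H \<le> 1" by (metis card.empty card.insert card_mono finite.emptyI finite.insertI
          empty_iff insert_absorb le_refl One_nat_def)
    then show False using H(2) prime_gt_1_nat[OF p(1)] by simp
  qed
  then obtain h where hH: "h \<in> H" and h1: "h \<noteq> \<one>\<^bsub>Gd d\<^esub>" by blast
  have hc: "h \<in> G_set d" using subgroup.subset[OF H(1)] hH by (auto simp: Gd_def)
  have grH: "group ((Gd d)\<lparr>carrier := H\<rparr>)" using G.subgroup_imp_group[OF H(1)] .
  have "h [^]\<^bsub>(Gd d)\<lparr>carrier := H\<rparr>\<^esub> order ((Gd d)\<lparr>carrier := H\<rparr>) = \<one>\<^bsub>(Gd d)\<lparr>carrier := H\<rparr>\<^esub>"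
    using group.pow_order_eq_1[OF grH] hH by simp
  then have "h [^]\<^bsub>Gd d\<^esub> p = \<one>\<^bsub>Gd d\<^esub>"
    using H(2) G.nat_pow_consistent[of h p H] by (simp add: order_def)
  then have hp: "gcong d (gpow h p) gone"
    using Gd_pow[OF assms(4) hc] by (simp add: Gd_def gcong_iff)
  define e where "e = n div d"
  have nde: "n = d * e" using assms(3) by (simp add: e_def)
  have cde: "coprime d e"
  proof (rule ccontr)
    assume "\<not> coprime d e"
    then obtain c where c: "c dvd d" "c dvd e" "\<not> is_unit c" by (rule not_coprimeE)
    then have "c \<noteq> 1" by auto
    then obtain q where q: "prime q" "q dvd c" using prime_factor_nat by blast
    have "q * q dvd d * e" using q c by (meson dvd_trans mult_dvd_mono)
    then show False using sqfree[OF assms(2,1) q(1)] nde by simp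
  qed
  then have cde': "coprime (int d) (int e)" by simp
  obtain x1 where x1: "[x1 = fst h] (mod int d)" "[x1 = 1] (mod int e)"
    using binary_chinese_remainder_int[OF cde'] by blast
  obtain x2 where x2: "[x2 = snd h] (mod int d)" "[x2 = 0] (mod int e)"
    using binary_chinese_remainder_int[OF cde'] by blast
  define z where "z = (x1, x2)"
  have zh: "gcong d z h" using x1 x2 by (simp add: z_def gcong_def)
  have nh: "[gnorm h = 1] (mod int d)" using hc assms(4) by (simp add: G_set_iff)
  have nzd: "[gnorm z = 1] (mod int d)" using gcong_norm[OF zh] nh by (metis cong_trans)
  have "[x1^2 + x2^2 = 1^2 + 0^2] (mod int e)"
    using x1(2) x2(2) by (intro cong_add cong_pow)
  then have nze: "[gnorm z = 1] (mod int e)" by (simp add: z_def gnorm_def)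
  have "[gnorm z = 1] (mod int d * int e)" using coprime_cong_mult[OF nzd nze cde'] .
  then have nzn: "[gnorm z = 1] (mod int n)" by (simp add: nde)
  have cop: "coprime (int n) (gnorm z)"
  proof -
    have "gcd (gnorm z) (int n) = gcd 1 (int n)" using cong_gcd_eq[OF nzn] .
    then show ?thesis by (simp add: coprime_iff_gcd_eq_1 gcd.commute)
  qed
  have A: "gcong d (gpow z (2 * FF n)) gone" using key_L[OF assms(2,3) cop nzd] .
  have B: "gcong d (gpow z p) gone" using gcong_trans[OF gcong_pow[OF zh] hp] .
  have C: "coprime p (2 * FF n)" using coprime_p_F[OF p(1) pn assms(1)] .
  have "gcong d z gone" using key_K[OF B A C] prime_gt_0_nat[OF p(1)] by blast
  then have "gcong d h gone" using zh gcong_sym gcong_trans by blast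
  then have "h = \<one>\<^bsub>Gd d\<^esub>" using hc assms(4) by (simp add: gcong_iff G_set_iff Gd_def)
  then show False using h1 by simp
qed

end
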